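(* For $0<\rho\le1$ and $\varphi\in[0,2\pi]$ let $A(\rho,\varphi)=D_\rho T_\varphi D_\rho^{-1}=\begin{pmatrix}\cos\varphi&-\rho^{-1}\sin\varphi\\ \rho\sin\varphi&\cos\varphi\end{pmatrix}$ and let $\theta_1(\varphi,\rho):=\theta_1^{\sup,\varlimsup}$ be the first outer angular value of the autonomous discrete system $u_{n+1}=A(\rho,\varphi)u_n$ in $\mathbb R^2$. Then $(\varphi,\rho)\mapsto\theta_1(\varphi,\rho)$ is upper semicontinuous on $[0,2\pi]\times(0,1]$.
   Context: $D_\rho=\mathrm{diag}(1,\rho)$, $T_\varphi=\begin{pmatrix}\cos\varphi&-\sin\varphi\\ \sin\varphi&\cos\varphi\end{pmatrix}$. For a sequence of invertible matrices $A_n$ (here $A_n\equiv A(\rho,\varphi)$), $\Phi(n,0)=A_{n-1}\cdots A_0$, $\Phi(0,0)=I$. For nonzero $x,y\in\mathbb R^2$ (identified with lines), $\angle(x,y)\in[0,\pi/2]$ is the angle between $\mathrm{span}(x)$ and $\mathrm{span}(y)$, i.e. $\cos\angle(x,y)=|x^\top y|/(\|x\|\|y\|)$. The first outer angular value is $\theta_1^{\sup,\varlimsup}=\sup_{v\ne0}\varlimsup_{n\to\infty}\frac1n\sum_{j=1}^n\angle(\Phi(j-1,0)v,\Phi(j,0)v)$. It is known that for this system this value coincides with the three other angular values ($\sup$ over $v$ outside or inside, $\varlimsup$ or $\varliminf$). *)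

theory Defs
  imports "HOL-Analysis.Analysis"
begin

text \<open>The matrix A(rho,phi) = D_rho T_phi D_rho^{-1}, written out explicitly.\<close>
definition Amat :: "real \<Rightarrow> real \<Rightarrow> real^2^2" where
  "Amat rho phi = vector [vector [cos phi, - sin phi / rho], vector [rho * sin phi, cos phi]]"

fun Phi :: "(nat \<Rightarrow> real^2^2) \<Rightarrow> nat \<Rightarrow> real^2^2" where
  "Phi As 0 = mat 1"
| "Phi As (Suc n) = As n ** Phi As n"

definition line_angle :: "real^2 \<Rightarrow> real^2 \<Rightarrow> real" where
  "line_angle x y = arccos (\<bar>x \<bullet> y\<bar> / (norm x * norm y))"

definition theta1_outer :: "(nat \<Rightarrow> real^2^2) \<Rightarrow> ereal" where
  "theta1_outer As =
     (SUP v \<in> {v :: real^2. v \<noteq> 0}.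
        limsup (\<lambda>n. ereal ((1 / real n) *
          (\<Sum>j = 1..n. line_angle (Phi As (j - 1) *v v) (Phi As j *v v)))))"

definition upper_semicontinuous_on :: "'a::topological_space set \<Rightarrow> ('a \<Rightarrow> 'b::linorder) \<Rightarrow> bool" where
  "upper_semicontinuous_on S f \<longleftrightarrow>
     (\<forall>x\<in>S. \<forall>a. f x < a \<longrightarrow> (\<forall>\<^sub>F y in at x within S. f y < a))"

end

theory Submission imports Defs begin

definition Dm :: "real \<Rightarrow> real \<times> real \<Rightarrow> real \<times> real" where
  "Dm r p = (fst p, r * snd p)"
definition Rt :: "real \<Rightarrow> real \<times> real \<Rightarrow> real \<times> real" where
  "Rt f p = (cos f * fst p - sin f * snd p, sin f * fst p + cos f * snd p)"
definition LA :: "real \<times> real \<Rightarrow> real \<times> real \<Rightarrow> real" where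
  "LA p q = arccos (\<bar>p \<bullet> q\<bar> / (norm p * norm q))"
definition Hf :: "real \<Rightarrow> real \<Rightarrow> real \<times> real \<Rightarrow> real" where
  "Hf f r p = LA (Dm r p) (Dm r (Rt f p))"
definition Sf :: "real \<Rightarrow> real \<Rightarrow> nat \<Rightarrow> real \<times> real \<Rightarrow> real" where
  "Sf f r n p = (\<Sum>k<n. Hf f r ((Rt f ^^ k) p))"
definition Bf :: "real \<Rightarrow> real \<Rightarrow> nat \<Rightarrow> real" where
  "Bf f r n = (SUP p\<in>sphere 0 1. Sf f r n p)"

lemma LA_arg: "0 \<le> \<bar>p \<bullet> q\<bar> / (norm p * norm q) \<and> \<bar>p \<bullet> q\<bar> / (norm p * norm q) \<le> 1"
proof (cases "norm p * norm q = 0")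
  case True then show ?thesis by auto
next
  case False
  then have "norm p * norm q > 0" by (simp add: less_le)
  moreover have "\<bar>p \<bullet> q\<bar> \<le> norm p * norm q" by (rule Cauchy_Schwarz_ineq2)
  ultimately show ?thesis by (simp add: divide_le_eq_1)
qed

lemma LA_bounds: "0 \<le> LA p q" "LA p q \<le> pi/2"
proof -
  have a: "0 \<le> \<bar>p \<bullet> q\<bar> / (norm p * norm q)" "\<bar>p \<bullet> q\<bar> / (norm p * norm q) \<le> 1" using LA_arg[of p q] by auto
  show "0 \<le> LA p q" unfolding LA_def by (rule arccos_lbound) (use a in linarith)+
  show "LA p q \<le> pi/2" unfolding LA_def by (rule arccos_le_pi2) (use a in linarith)+
qed

lemma Hf_bounds: "0 \<le> Hf f r p" "Hf f r p \<le> pi/2"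
  unfolding Hf_def by (rule LA_bounds)+

lemma Sf_nonneg: "0 \<le> Sf f r n p"
  unfolding Sf_def by (intro sum_nonneg Hf_bounds)

lemma Sf_le: "Sf f r n p \<le> n * (pi/2)"
  unfolding Sf_def using sum_bounded_above[of "{..<n}" "\<lambda>k. Hf f r ((Rt f ^^ k) p)" "pi/2"] Hf_bounds
  by auto

lemma norm_Rt: "norm (Rt f p) = norm p"
proof -
  have "(cos f * fst p - sin f * snd p)^2 + (sin f * fst p + cos f * snd p)^2 = (fst p)^2 + (snd p)^2"
  proof -
    have "(cos f * fst p - sin f * snd p)^2 + (sin f * fst p + cos f * snd p)^2 = ((sin f)^2 + (cos f)^2) * ((fst p)^2 + (snd p)^2)"
      by algebra
    then show ?thesis by (simp only: sin_cos_squared_add mult_1_left)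
  qed
  then show ?thesis using norm_Pair[of "fst p" "snd p"] by (simp add: Rt_def norm_Pair)
qed

lemma norm_Rt_iter: "norm ((Rt f ^^ k) p) = norm p"
  by (induction k) (auto simp: norm_Rt)

lemma Rt_diff: "Rt f p - Rt f q = Rt f (p - q)"
  by (simp add: Rt_def algebra_simps)

lemma Rt_scale: "Rt f (c *\<^sub>R p) = c *\<^sub>R Rt f p"
  by (simp add: Rt_def algebra_simps)

lemma Rt_iter_scale: "(Rt f ^^ k) (c *\<^sub>R p) = c *\<^sub>R (Rt f ^^ k) p"
  by (induction k) (auto simp: Rt_scale)

lemma dist_Rt_iter: "dist ((Rt f ^^ k) p) ((Rt f ^^ k) q) = dist p q"
proof (induction k)
  case (Suc k)
  then show ?case by (simp add: dist_norm Rt_diff norm_Rt)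
qed simp

lemma Dm_scale: "Dm r (c *\<^sub>R p) = c *\<^sub>R Dm r p"
  by (simp add: Dm_def)

lemma LA_scale: "c > 0 \<Longrightarrow> LA (c *\<^sub>R p) (c *\<^sub>R q) = LA p q"
  unfolding LA_def
  by (simp add: abs_mult power2_eq_square)

lemma Dm_nz: "r \<noteq> 0 \<Longrightarrow> p \<noteq> 0 \<Longrightarrow> Dm r p \<noteq> 0"
  by (auto simp: Dm_def prod_eq_iff)


lemma Sf_add: "Sf f r (a + b) p = Sf f r a p + Sf f r b ((Rt f ^^ a) p)"
proof (induction b)
  case 0 then show ?case by (simp add: Sf_def)
next
  case (Suc b)
  have "(Rt f ^^ (a + b)) p = (Rt f ^^ b) ((Rt f ^^ a) p)"
    using funpow_add[of b a "Rt f"] by (simp add: add.commute)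
  then show ?case using Suc by (simp add: Sf_def)
qed

lemma sphere_iter: "p \<in> sphere 0 1 \<Longrightarrow> (Rt f ^^ k) p \<in> sphere 0 1"
  by (simp add: norm_Rt_iter)

lemma bdd_Sf: "bdd_above ((\<lambda>p. Sf f r n p) ` A)"
  using Sf_le by (intro bdd_aboveI2) blast

lemma sphere_ne: "sphere (0::real\<times>real) 1 \<noteq> {}"
  by (simp)

lemma Sf_le_Bf: "p \<in> sphere 0 1 \<Longrightarrow> Sf f r n p \<le> Bf f r n"
  unfolding Bf_def by (rule cSUP_upper[OF _ bdd_Sf])

lemma Bf_nonneg: "0 \<le> Bf f r n"
proof -
  have "(1::real,0::real) \<in> sphere 0 1" by simp
  then show ?thesis using Sf_le_Bf Sf_nonneg order.trans by blast
qed

lemma Sf_blocks: "p \<in> sphere 0 1 \<Longrightarrow> Sf f r (q * N + s) p \<le> q * Bf f r N + s * (pi/2)"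
proof (induction q arbitrary: p)
  case 0 then show ?case using Sf_le[of f r s p] by simp
next
  case (Suc q)
  have "Sf f r (Suc q * N + s) p = Sf f r N p + Sf f r (q * N + s) ((Rt f ^^ N) p)"
    using Sf_add[of f r N "q * N + s" p] by (simp add: add.assoc)
  also have "\<dots> \<le> Bf f r N + (q * Bf f r N + s * (pi/2))"
    using Suc.IH[OF sphere_iter[OF Suc.prems]] Sf_le_Bf[OF Suc.prems] by (intro add_mono)
  finally show ?case by (simp add: algebra_simps)
qed

lemma Sf_upper:
  assumes "p \<in> sphere 0 1" "N \<ge> 1"
  shows "Sf f r n p \<le> real n / real N * Bf f r N + real N * (pi/2)"
proof -
  have e: "n = (n div N) * N + n mod N" by simp
  have "Sf f r n p \<le> real (n div N) * Bf f r N + real (n mod N) * (pi/2)"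
    using Sf_blocks[OF assms(1), where q="n div N" and N=N and s="n mod N" and f=f and r=r] e by simp
  moreover have "real (n div N) \<le> real n / real N"
  proof -
    have "real (n div N) * real N \<le> real n"
      using div_times_less_eq_dividend[of n N] by (simp only: of_nat_mult[symmetric] of_nat_le_iff)
    then show ?thesis using assms(2) by (simp add: le_divide_eq)
  qed
  moreover have "real (n mod N) \<le> real N" using assms(2) by simp
  ultimately show ?thesis using Bf_nonneg[of f r N] pi_gt_zero
    by (meson add_mono mult_right_mono order.trans less_imp_le divide_nonneg_nonneg zero_le_numeral)
qed


lemma cont_Rt [continuous_intros]:
  "continuous_on U f \<Longrightarrow> continuous_on U g \<Longrightarrow> continuous_on U (\<lambda>z. Rt (f z) (g z))"
  for U :: "'a::metric_space set"
  unfolding Rt_def by (auto intro!: continuous_intros continuous_on_cos continuous_on_sin)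

lemma cont_Dm [continuous_intros]:
  "continuous_on U f \<Longrightarrow> continuous_on U g \<Longrightarrow> continuous_on U (\<lambda>z. Dm (f z) (g z))"
  unfolding Dm_def by (intro continuous_intros)

lemma cont_iter:
  "continuous_on U f \<Longrightarrow> continuous_on U g \<Longrightarrow> continuous_on U (\<lambda>z. (Rt (f z) ^^ k) (g z))"
  for U :: "'a::metric_space set"
  by (induction k) (auto intro!: continuous_intros)

lemma cont_LA:
  assumes "continuous_on U f" "continuous_on U g" "\<forall>z\<in>U. f z \<noteq> 0 \<and> g z \<noteq> 0"
  shows "continuous_on U (\<lambda>z. LA (f z) (g z))"
  unfolding LA_def
proof (rule continuous_on_arccos)
  show "continuous_on U (\<lambda>x. \<bar>f x \<bullet> g x\<bar> / (norm (f x) * norm (g x)))"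
    using assms by (auto intro!: continuous_intros)
  show "\<forall>x\<in>U. - 1 \<le> \<bar>f x \<bullet> g x\<bar> / (norm (f x) * norm (g x)) \<and> \<bar>f x \<bullet> g x\<bar> / (norm (f x) * norm (g x)) \<le> 1"
    using LA_arg by (smt (verit))
qed

lemma Rt_nz: "w \<noteq> 0 \<Longrightarrow> Rt f w \<noteq> 0"
  using norm_Rt[of f w] by (metis norm_eq_zero)

definition Dom :: "((real \<times> real) \<times> (real \<times> real)) set" where
  "Dom = {z. snd (fst z) > 0 \<and> snd z \<noteq> 0}"

lemma cont_Hiter:
  "continuous_on Dom (\<lambda>z. Hf (fst (fst z)) (snd (fst z)) ((Rt (fst (fst z)) ^^ k) (snd z)))"
  unfolding Hf_def
proof (rule cont_LA)
  have c: "continuous_on Dom (\<lambda>z. (Rt (fst (fst z)) ^^ k) (snd z))"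
    by (intro cont_iter continuous_intros)
  show "continuous_on Dom (\<lambda>z. Dm (snd (fst z)) ((Rt (fst (fst z)) ^^ k) (snd z)))"
    by (intro continuous_intros c)
  show "continuous_on Dom (\<lambda>z. Dm (snd (fst z)) (Rt (fst (fst z)) ((Rt (fst (fst z)) ^^ k) (snd z))))"
    by (intro continuous_intros c)
  show "\<forall>z\<in>Dom. Dm (snd (fst z)) ((Rt (fst (fst z)) ^^ k) (snd z)) \<noteq> 0 \<and>
      Dm (snd (fst z)) (Rt (fst (fst z)) ((Rt (fst (fst z)) ^^ k) (snd z))) \<noteq> 0"
  proof
    fix z assume z: "z \<in> Dom"
    have n: "norm ((Rt (fst (fst z)) ^^ k) (snd z)) \<noteq> 0" using z by (simp add: Dom_def norm_Rt_iter)
    then show "Dm (snd (fst z)) ((Rt (fst (fst z)) ^^ k) (snd z)) \<noteq> 0 \<and>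
      Dm (snd (fst z)) (Rt (fst (fst z)) ((Rt (fst (fst z)) ^^ k) (snd z))) \<noteq> 0"
      using z by (intro conjI Dm_nz Rt_nz) (auto simp: Dom_def)
  qed
qed

lemma cont_Sf: "continuous_on Dom (\<lambda>z. Sf (fst (fst z)) (snd (fst z)) N (snd z))"
  unfolding Sf_def by (intro continuous_on_sum cont_Hiter)

lemma cont_H_fixed: "r > 0 \<Longrightarrow> continuous_on (sphere 0 1) (Hf f r)"
proof -
  assume r: "r > 0"
  have "continuous_on ((\<lambda>p. ((f, r), p)) ` sphere 0 1) (\<lambda>z. Hf (fst (fst z)) (snd (fst z)) ((Rt (fst (fst z)) ^^ 0) (snd z)))"
    by (rule continuous_on_subset[OF cont_Hiter]) (use r in \<open>auto simp: Dom_def\<close>)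
  then have "continuous_on (sphere 0 1) ((\<lambda>z. Hf (fst (fst z)) (snd (fst z)) ((Rt (fst (fst z)) ^^ 0) (snd z))) \<circ> (\<lambda>p. ((f, r), p)))"
    by (intro continuous_on_compose continuous_intros)
  then show ?thesis by (simp add: comp_def)
qed


lemma Bf_usc:
  assumes r0: "r0 > 0" and lt: "Bf f0 r0 N < a"
  shows "\<exists>d>0. \<forall>f r. r > 0 \<longrightarrow> dist (f,r) (f0,r0) < d \<longrightarrow> Bf f r N < a"
proof -
  define K where "K = cball (f0,r0) (r0/2) \<times> sphere (0::real\<times>real) 1"
  have cK: "compact K" unfolding K_def by (intro compact_Times compact_cball compact_sphere)
  have KD: "K \<subseteq> Dom"
  proof
    fix z assume "z \<in> K"
    then have "dist (f0,r0) (fst z) \<le> r0/2" "norm (snd z) = 1" by (auto simp: K_def mem_Times_iff)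
    moreover have "dist (snd (f0,r0)) (snd (fst z)) \<le> dist (f0,r0) (fst z)" by (rule dist_snd_le)
    ultimately have "snd (fst z) > 0" "snd z \<noteq> 0" using r0 by (auto simp: dist_real_def)
    then show "z \<in> Dom" by (simp add: Dom_def)
  qed
  have uc: "uniformly_continuous_on K (\<lambda>z. Sf (fst (fst z)) (snd (fst z)) N (snd z))"
    by (rule compact_uniformly_continuous[OF continuous_on_subset[OF cont_Sf KD] cK])
  define e where "e = (a - Bf f0 r0 N) / 2"
  have e: "e > 0" using lt by (simp add: e_def)
  obtain \<delta> where \<delta>: "\<delta> > 0" and h\<delta>: "\<And>x x'. x \<in> K \<Longrightarrow> x' \<in> K \<Longrightarrow> dist x' x < \<delta> \<Longrightarrow>
      dist (Sf (fst (fst x')) (snd (fst x')) N (snd x')) (Sf (fst (fst x)) (snd (fst x)) N (snd x)) < e"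
    using uc e unfolding uniformly_continuous_on_def by metis
  show ?thesis
  proof (intro exI[of _ "min \<delta> (r0/2)"] conjI allI impI)
    show "min \<delta> (r0/2) > 0" using \<delta> r0 by simp
    fix f r assume "r > 0" and d: "dist (f, r) (f0, r0) < min \<delta> (r0/2)"
    have "Bf f r N \<le> Bf f0 r0 N + e"
      unfolding Bf_def[of f r N]
    proof (rule cSUP_least)
      show "sphere (0::real\<times>real) 1 \<noteq> {}" by simp
      fix p :: "real \<times> real" assume p: "p \<in> sphere 0 1"
      have in1: "((f0,r0),p) \<in> K" using p r0 by (simp add: K_def)
      have in2: "((f,r),p) \<in> K" using p d by (simp add: K_def dist_commute)
      have "dist ((f,r),p) ((f0,r0),p) = dist (f,r) (f0,r0)" by (simp add: dist_Pair_Pair)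
      then have "dist ((f,r),p) ((f0,r0),p) < \<delta>" using d by simp
      from h\<delta>[OF in1 in2 this] have "dist (Sf f r N p) (Sf f0 r0 N p) < e" by simp
      moreover have "Sf f0 r0 N p \<le> Bf f0 r0 N" by (rule Sf_le_Bf[OF p])
      ultimately show "Sf f r N p \<le> Bf f0 r0 N + e" by (simp add: dist_real_def)
    qed
    then show "Bf f r N < a" using lt unfolding e_def by (simp add: field_simps)
  qed
qed


lemma Sf_close:
  assumes r: "r > 0" and p: "p \<in> sphere 0 1" and q: "q \<in> sphere 0 1"
    and h: "\<And>x y. x \<in> sphere 0 1 \<Longrightarrow> y \<in> sphere 0 1 \<Longrightarrow> dist x y < \<delta> \<Longrightarrow> dist (Hf f r x) (Hf f r y) < e"
    and d: "dist p q < \<delta>"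
  shows "Sf f r m q \<ge> Sf f r m p - m * e"
proof -
  have "Sf f r m p - Sf f r m q = (\<Sum>k<m. Hf f r ((Rt f ^^ k) p) - Hf f r ((Rt f ^^ k) q))"
    by (simp add: Sf_def sum_subtractf)
  also have "\<dots> \<le> (\<Sum>k<m. e)"
  proof (rule sum_mono)
    fix k assume "k \<in> {..<m}"
    have "dist (Hf f r ((Rt f ^^ k) p)) (Hf f r ((Rt f ^^ k) q)) < e"
      using h[OF sphere_iter[OF p] sphere_iter[OF q]] d by (simp add: dist_Rt_iter)
    then show "Hf f r ((Rt f ^^ k) p) - Hf f r ((Rt f ^^ k) q) \<le> e" by (simp add: dist_real_def)
  qed
  finally show ?thesis by simp
qed

lemma lower_bound:
  assumes r: "r > 0" and hb: "\<forall>N\<ge>1. real N * b \<le> Bf f r N"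
  shows "\<exists>l\<in>sphere 0 1. ereal b \<le> limsup (\<lambda>n. ereal (1 / real n * Sf f r n l))"
proof -
  have "\<forall>n. \<exists>p. p \<in> sphere 0 1 \<and> Bf f r (Suc n) - 1 < Sf f r (Suc n) p"
  proof
    fix n
    have "Bf f r (Suc n) - 1 < Bf f r (Suc n)" by simp
    then show "\<exists>p. p \<in> sphere 0 1 \<and> Bf f r (Suc n) - 1 < Sf f r (Suc n) p"
      unfolding Bf_def[of f r "Suc n"] by (subst (asm) less_cSUP_iff[OF sphere_ne bdd_Sf]) blast
  qed
  then obtain P where P: "\<And>n. P n \<in> sphere 0 1" "\<And>n. Bf f r (Suc n) - 1 < Sf f r (Suc n) (P n)"
    by metis
  have "seq_compact (sphere (0::real\<times>real) 1)" by (intro compact_imp_seq_compact compact_sphere)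
  then obtain l R where l: "l \<in> sphere 0 1" and R: "strict_mono R" and lim: "(P \<circ> R) \<longlonglongrightarrow> l"
    unfolding seq_compact_def using P(1) by metis
  have uc: "uniformly_continuous_on (sphere 0 1) (Hf f r)"
    by (rule compact_uniformly_continuous[OF cont_H_fixed[OF r] compact_sphere])
  define X where "X n = ereal (1 / real n * Sf f r n l)" for n
  have "ereal b \<le> limsup X"
  proof (rule ereal_le_epsilon2)
    fix \<epsilon> :: real assume \<epsilon>: "\<epsilon> > 0"
    obtain \<delta> where \<delta>: "\<delta> > 0" and h\<delta>: "\<And>x y. x \<in> sphere 0 1 \<Longrightarrow> y \<in> sphere 0 1 \<Longrightarrow> dist x y < \<delta> \<Longrightarrow>
      dist (Hf f r x) (Hf f r y) < \<epsilon>/2"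
      using uc \<epsilon> unfolding uniformly_continuous_on_def by (metis half_gt_zero dist_commute)
    have ev1: "eventually (\<lambda>k. dist ((P \<circ> R) k) l < \<delta>) sequentially"
      using lim \<delta> by (simp add: tendsto_iff)
    have ev2: "eventually (\<lambda>k. real k \<ge> 2 / \<epsilon>) sequentially"
      by real_asymp
    have "eventually (\<lambda>k. ereal (b - \<epsilon>) \<le> (X \<circ> (Suc \<circ> R)) k) sequentially"
      using ev1 ev2
    proof eventually_elim
      case (elim k)
      define m where "m = Suc (R k)"
      have mpos: "real m > 0" by (simp add: m_def)
      have "real k \<le> real (R k)" using R by (simp add: strict_mono_imp_increasing)
      then have "real m \<ge> 2 / \<epsilon>" using elim(2) by (simp add: m_def)
      then have im: "1 / real m \<le> \<epsilon> / 2" using \<epsilon> mpos by (simp add: field_simps)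
      have c: "Sf f r m l \<ge> Sf f r m (P (R k)) - m * (\<epsilon>/2)"
        by (rule Sf_close[OF r P(1) l h\<delta>]) (use elim(1) in auto)
      have "Sf f r m (P (R k)) > real m * b - 1"
        using P(2)[of "R k"] hb[rule_format, of m] by (simp add: m_def)
      then have "Sf f r m l \<ge> real m * b - 1 - real m * (\<epsilon>/2)" using c by linarith
      then have "1 / real m * Sf f r m l \<ge> 1 / real m * (real m * b - 1 - real m * (\<epsilon>/2))"
        by (rule mult_left_mono) (use mpos in auto)
      moreover have "1 / real m * (real m * b - 1 - real m * (\<epsilon>/2)) = b - 1 / real m - \<epsilon>/2"
        using mpos by (simp add: field_simps)
      ultimately have "1 / real m * Sf f r m l \<ge> b - 1 / real m - \<epsilon>/2" by simp
      then have "1 / real m * Sf f r m l \<ge> b - \<epsilon>" using im by linarith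
      then show ?case by (simp add: X_def m_def)
    qed
    then have "ereal (b - \<epsilon>) \<le> limsup (X \<circ> (Suc \<circ> R))"
      by (intro le_Limsup) simp_all
    also have "\<dots> \<le> limsup X"
      by (rule limsup_subseq_mono) (use R in \<open>simp add: strict_mono_def\<close>)
    finally have "ereal (b - \<epsilon>) + ereal \<epsilon> \<le> limsup X + ereal \<epsilon>" by (rule add_right_mono)
    then show "ereal b \<le> limsup X + ereal \<epsilon>" by simp
  qed
  then show ?thesis using l unfolding X_def by blast
qed


definition toP :: "real^2 \<Rightarrow> real \<times> real" where "toP w = (w$1, w$2)"

lemma inner_toP: "(a::real^2) \<bullet> b = toP a \<bullet> toP b"
  by (simp add: inner_vec_def sum_2 toP_def)

lemma norm_toP: "norm (a::real^2) = norm (toP a)"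
  by (simp add: norm_eq_sqrt_inner inner_toP)

lemma line_angle_LA: "line_angle a b = LA (toP a) (toP b)"
  by (simp add: line_angle_def LA_def inner_toP norm_toP)

lemma Amat_toP:
  assumes "r \<noteq> 0" "toP w = Dm r u"
  shows "toP (Amat r f *v w) = Dm r (Rt f u)"
proof -
  have w1: "w$1 = fst u" and w2: "w$2 = r * snd u" using assms(2) by (auto simp: toP_def Dm_def)
  show ?thesis using assms(1)
    by (simp add: toP_def Amat_def matrix_vector_mult_def sum_2 w1 w2 Dm_def Rt_def algebra_simps)
qed

lemma Phi_toP:
  assumes "r \<noteq> 0" "toP v = Dm r u"
  shows "toP (Phi (\<lambda>n. Amat r f) j *v v) = Dm r ((Rt f ^^ j) u)"
proof (induction j)
  case 0 then show ?case using assms by simp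
next
  case (Suc j)
  have "Phi (\<lambda>n. Amat r f) (Suc j) *v v = Amat r f *v (Phi (\<lambda>n. Amat r f) j *v v)"
    by (simp add: matrix_vector_mul_assoc)
  then show ?case using Amat_toP[OF assms(1) Suc] by simp
qed

lemma sum_shift1: "(\<Sum>j = 1..n. g j) = (\<Sum>k<n. g (Suc k))"
  by (induction n) auto

lemma avg_eq:
  assumes r: "r > 0" and tv: "toP v = Dm r u0" and u0: "u0 \<noteq> 0"
  shows "(\<Sum>j = 1..n. line_angle (Phi (\<lambda>n. Amat r f) (j - 1) *v v) (Phi (\<lambda>n. Amat r f) j *v v))
       = Sf f r n ((1 / norm u0) *\<^sub>R u0)"
proof -
  define u where "u = (1 / norm u0) *\<^sub>R u0"
  have u0u: "u0 = norm u0 *\<^sub>R u" using u0 by (simp add: u_def)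
  have it: "(Rt f ^^ k) u0 = norm u0 *\<^sub>R (Rt f ^^ k) u" for k
    by (subst u0u) (rule Rt_iter_scale)
  have np: "norm u0 > 0" using u0 by simp
  have "(\<Sum>j = 1..n. line_angle (Phi (\<lambda>n. Amat r f) (j - 1) *v v) (Phi (\<lambda>n. Amat r f) j *v v))
      = (\<Sum>k<n. LA (Dm r ((Rt f ^^ k) u0)) (Dm r ((Rt f ^^ Suc k) u0)))"
    unfolding sum_shift1 line_angle_LA using r tv by (simp add: Phi_toP del: Phi.simps)
  also have "\<dots> = (\<Sum>k<n. Hf f r ((Rt f ^^ k) u))"
  proof (rule sum.cong[OF refl])
    fix k
    have "(Rt f ^^ Suc k) u0 = norm u0 *\<^sub>R Rt f ((Rt f ^^ k) u)"
      using it[of "Suc k"] by simp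
    then show "LA (Dm r ((Rt f ^^ k) u0)) (Dm r ((Rt f ^^ Suc k) u0)) = Hf f r ((Rt f ^^ k) u)"
      by (simp add: it Dm_scale LA_scale[OF np] Hf_def)
  qed
  finally show ?thesis by (simp add: Sf_def u_def)
qed


lemma theta_upper:
  assumes r: "r > 0" and N: "N \<ge> 1"
  shows "theta1_outer (\<lambda>n. Amat r f) \<le> ereal (Bf f r N / real N)"
  unfolding theta1_outer_def
proof (rule SUP_least)
  fix v :: "real^2" assume "v \<in> {v. v \<noteq> 0}"
  then have v: "v \<noteq> 0" by simp
  define u0 where "u0 = (fst (toP v), snd (toP v) / r)"
  have tv: "toP v = Dm r u0" using r by (simp add: u0_def Dm_def)
  have "toP v \<noteq> 0" using v norm_toP[of v] by (metis norm_eq_zero)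
  then have u0: "u0 \<noteq> 0" using tv by (auto simp: Dm_def zero_prod_def)
  define u where "u = (1 / norm u0) *\<^sub>R u0"
  have us: "u \<in> sphere 0 1" using u0 by (simp add: u_def)
  have eq: "(\<lambda>n. ereal (1 / real n * (\<Sum>j = 1..n. line_angle (Phi (\<lambda>n. Amat r f) (j - 1) *v v) (Phi (\<lambda>n. Amat r f) j *v v))))
      = (\<lambda>n. ereal (1 / real n * Sf f r n u))"
    by (simp only: avg_eq[OF r tv u0] u_def)
  have "limsup (\<lambda>n. ereal (1 / real n * Sf f r n u)) \<le> limsup (\<lambda>n. ereal (Bf f r N / real N + real N * (pi/2) / real n))"
  proof (rule Limsup_mono)
    show "\<forall>\<^sub>F n in sequentially. ereal (1 / real n * Sf f r n u) \<le> ereal (Bf f r N / real N + real N * (pi / 2) / real n)"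
      using eventually_ge_at_top[of 1]
    proof eventually_elim
      case (elim n)
      have "1 / real n * Sf f r n u \<le> 1 / real n * (real n / real N * Bf f r N + real N * (pi/2))"
        by (rule mult_left_mono[OF Sf_upper[OF us N]]) simp
      also have "\<dots> = Bf f r N / real N + real N * (pi / 2) / real n"
        using elim by (simp add: field_simps)
      finally show ?case by simp
    qed
  qed
  also have "\<dots> = ereal (Bf f r N / real N)"
  proof (rule lim_imp_Limsup)
    show "\<not> trivial_limit (sequentially :: nat filter)" by simp
    have "(\<lambda>n. Bf f r N / real N + real N * (pi/2) / real n) \<longlonglongrightarrow> Bf f r N / real N + 0"
      by (intro tendsto_add tendsto_const lim_const_over_n)
    then show "(\<lambda>n. ereal (Bf f r N / real N + real N * (pi/2) / real n)) \<longlonglongrightarrow> ereal (Bf f r N / real N)"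
      by (simp add: tendsto_ereal)
  qed
  finally show "limsup (\<lambda>n. ereal (1 / real n * (\<Sum>j = 1..n. line_angle (Phi (\<lambda>n. Amat r f) (j - 1) *v v) (Phi (\<lambda>n. Amat r f) j *v v))))
      \<le> ereal (Bf f r N / real N)" unfolding eq .
qed

lemma theta_lower:
  assumes r: "r > 0" and hb: "\<forall>N\<ge>1. real N * b \<le> Bf f r N"
  shows "ereal b \<le> theta1_outer (\<lambda>n. Amat r f)"
proof -
  obtain l where l: "l \<in> sphere 0 1" and lb: "ereal b \<le> limsup (\<lambda>n. ereal (1 / real n * Sf f r n l))"
    using lower_bound[OF r hb] by blast
  define v :: "real^2" where "v = vector [fst l, r * snd l]"
  have tv: "toP v = Dm r l" by (simp add: v_def toP_def Dm_def)
  have l0: "l \<noteq> 0" using l by auto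
  have v0: "v \<noteq> 0"
  proof
    assume "v = 0"
    then have "toP v = 0" by (simp add: toP_def zero_prod_def)
    then show False using tv Dm_nz[of r l] r l0 by simp
  qed
  have nl: "(1 / norm l) *\<^sub>R l = l" using l by simp
  have eq: "(\<lambda>n. ereal (1 / real n * (\<Sum>j = 1..n. line_angle (Phi (\<lambda>n. Amat r f) (j - 1) *v v) (Phi (\<lambda>n. Amat r f) j *v v))))
      = (\<lambda>n. ereal (1 / real n * Sf f r n l))"
    using avg_eq[OF r tv l0] nl by simp
  show ?thesis unfolding theta1_outer_def
    by (rule SUP_upper2[of v]) (use v0 lb eq in auto)
qed

theorem mainTheorem16:
  shows "upper_semicontinuous_on ({0..2 * pi} \<times> {0<..1})
           (\<lambda>(phi, rho). theta1_outer (\<lambda>n. Amat rho phi))"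
  unfolding upper_semicontinuous_on_def
proof (intro ballI allI impI)
  fix x :: "real \<times> real" and a :: ereal
  assume xS: "x \<in> {0..2 * pi} \<times> {0<..1}"
  assume lt: "(case x of (phi, rho) \<Rightarrow> theta1_outer (\<lambda>n. Amat rho phi)) < a"
  obtain f0 r0 where x: "x = (f0, r0)" by (cases x)
  have r0: "r0 > 0" using xS x by auto
  have lt': "theta1_outer (\<lambda>n. Amat r0 f0) < a" using lt x by simp
  obtain b where b1: "theta1_outer (\<lambda>n. Amat r0 f0) < ereal b" and b2: "ereal b < a"
    using ereal_dense2[OF lt'] by blast
  have "\<exists>N\<ge>1. Bf f0 r0 N < real N * b"
  proof (rule ccontr)
    assume "\<not> ?thesis"
    then have "\<forall>N\<ge>1. real N * b \<le> Bf f0 r0 N" by (auto simp: not_less)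
    from theta_lower[OF r0 this] b1 show False by simp
  qed
  then obtain N where N: "N \<ge> 1" and BN: "Bf f0 r0 N < real N * b" by blast
  obtain d where d: "d > 0" and hd: "\<And>f r. r > 0 \<Longrightarrow> dist (f,r) (f0,r0) < d \<Longrightarrow> Bf f r N < real N * b"
    using Bf_usc[OF r0 BN] by blast
  show "\<forall>\<^sub>F y in at x within {0..2 * pi} \<times> {0<..1}. (case y of (phi, rho) \<Rightarrow> theta1_outer (\<lambda>n. Amat rho phi)) < a"
    unfolding eventually_at
  proof (intro exI[of _ d] conjI ballI impI)
    show "d > 0" by (rule d)
    fix y assume yS: "y \<in> {0..2 * pi} \<times> {0<..1}" and yd: "y \<noteq> x \<and> dist y x < d"
    obtain f r where y: "y = (f, r)" by (cases y)
    have r: "r > 0" using yS y by auto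
    have "Bf f r N < real N * b" using hd[OF r] yd x y by simp
    then have "Bf f r N / real N < b" using N by (simp add: divide_less_eq mult.commute)
    then have lt2: "ereal (Bf f r N / real N) < ereal b" by simp
    have t: "theta1_outer (\<lambda>n. Amat r f) \<le> ereal (Bf f r N / real N)" by (rule theta_upper[OF r N])
    from t lt2 have "theta1_outer (\<lambda>n. Amat r f) < ereal b" by (rule order.strict_trans1)
    then show "(case y of (phi, rho) \<Rightarrow> theta1_outer (\<lambda>n. Amat rho phi)) < a"
      using b2 y by simp
  qed
qed

end
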